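(* Let $G$ be a conference graph of order $v > 9$, i.e. a strongly regular graph with parameters $(v,k,\lambda,\mu) = \left(v, \frac{v-1}{2}, \frac{v-5}{4}, \frac{v-1}{4}\right)$. Then $G$ is optimistic: the distance matrix $D(G)$ has strictly more positive eigenvalues than negative eigenvalues, i.e. $n_{+}(G) > n_{-}(G)$.
   Context: For a connected graph $G$, the distance matrix $D(G)$ is the matrix indexed by vertices whose $(u,w)$ entry is the graph distance $d(u,w)$. $n_{+}(G)$ and $n_{-}(G)$ denote the number of strictly positive and strictly negative eigenvalues of $D(G)$ (counted with multiplicity). A graph is called optimistic if $n_{+}(G) > n_{-}(G)$. A strongly regular graph with parameters $(v,k,\lambda,\mu)$ is a $k$-regular graph on $v$ vertices in which every pair of adjacent vertices has exactly $\lambda$ common neighbours and every pair of distinct non-adjacent vertices has exactly $\mu$ common neighbours. *)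

theory Defs
  imports "Jordan_Normal_Form.Char_Poly"
begin

definition simple_graph :: "nat \<Rightarrow> (nat \<Rightarrow> nat \<Rightarrow> bool) \<Rightarrow> bool" where
  "simple_graph n E \<longleftrightarrow>
     (\<forall>u w. E u w \<longrightarrow> u < n \<and> w < n) \<and>
     (\<forall>u w. E u w \<longrightarrow> E w u) \<and>
     (\<forall>u. \<not> E u u)"

definition neighbours :: "nat \<Rightarrow> (nat \<Rightarrow> nat \<Rightarrow> bool) \<Rightarrow> nat \<Rightarrow> nat set" where
  "neighbours n E u = {w. w < n \<and> E u w}"

definition strongly_regular ::
  "nat \<Rightarrow> (nat \<Rightarrow> nat \<Rightarrow> bool) \<Rightarrow> nat \<Rightarrow> nat \<Rightarrow> nat \<Rightarrow> bool" where
  "strongly_regular n E k l m \<longleftrightarrow>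
     simple_graph n E \<and>
     (\<forall>u<n. card (neighbours n E u) = k) \<and>
     (\<forall>u<n. \<forall>w<n. E u w \<longrightarrow> card (neighbours n E u \<inter> neighbours n E w) = l) \<and>
     (\<forall>u<n. \<forall>w<n. u \<noteq> w \<and> \<not> E u w \<longrightarrow> card (neighbours n E u \<inter> neighbours n E w) = m)"

fun walk :: "(nat \<Rightarrow> nat \<Rightarrow> bool) \<Rightarrow> nat \<Rightarrow> nat \<Rightarrow> nat \<Rightarrow> bool" where
  "walk E 0 u w = (u = w)"
| "walk E (Suc len) u w = (\<exists>x. E u x \<and> walk E len x w)"

definition connected_graph :: "nat \<Rightarrow> (nat \<Rightarrow> nat \<Rightarrow> bool) \<Rightarrow> bool" where
  "connected_graph n E \<longleftrightarrow> (\<forall>u<n. \<forall>w<n. \<exists>len. walk E len u w)"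

text \<open>Graph distance: length of a shortest walk (meaningful for connected graphs).\<close>
definition graph_dist :: "(nat \<Rightarrow> nat \<Rightarrow> bool) \<Rightarrow> nat \<Rightarrow> nat \<Rightarrow> nat" where
  "graph_dist E u w = (LEAST len. walk E len u w)"

definition distance_matrix :: "nat \<Rightarrow> (nat \<Rightarrow> nat \<Rightarrow> bool) \<Rightarrow> real mat" where
  "distance_matrix n E = mat n n (\<lambda>(i, j). real (graph_dist E i j))"

definition n_plus :: "real mat \<Rightarrow> nat" where
  "n_plus A = (\<Sum>x\<in>{x. poly (char_poly A) x = 0 \<and> x > 0}. order x (char_poly A))"

definition n_minus :: "real mat \<Rightarrow> nat" where
  "n_minus A = (\<Sum>x\<in>{x. poly (char_poly A) x = 0 \<and> x < 0}. order x (char_poly A))"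

definition optimistic :: "nat \<Rightarrow> (nat \<Rightarrow> nat \<Rightarrow> bool) \<Rightarrow> bool" where
  "optimistic n E \<longleftrightarrow> n_plus (distance_matrix n E) > n_minus (distance_matrix n E)"

end

theory Submission imports Defs "Jordan_Normal_Form.Schur_Decomposition"
begin

definition trm :: "nat \<Rightarrow> 'a::comm_ring_1 mat \<Rightarrow> 'a" where
  "trm n X = (\<Sum>i<n. X $$ (i,i))"

lemma trm_comm: assumes "X \<in> carrier_mat n n" "Y \<in> carrier_mat n n"
  shows "trm n (X * Y) = trm n (Y * X)"
proof -
  have "trm n (X * Y) = (\<Sum>i<n. \<Sum>j<n. X $$ (i,j) * Y $$ (j,i))"
    unfolding trm_def using assms by (intro sum.cong) (auto simp: scalar_prod_def lessThan_atLeast0)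
  also have "\<dots> = (\<Sum>j<n. \<Sum>i<n. Y $$ (j,i) * X $$ (i,j))"
    by (subst sum.swap) (simp add: mult.commute)
  also have "\<dots> = trm n (Y * X)"
    unfolding trm_def using assms by (intro sum.cong) (auto simp: scalar_prod_def lessThan_atLeast0)
  finally show ?thesis .
qed

lemma trm_sim: assumes "X \<in> carrier_mat n n" "P \<in> carrier_mat n n" "Q \<in> carrier_mat n n" "Q * P = 1\<^sub>m n"
  shows "trm n (P * X * Q) = trm n X"
proof -
  have "trm n (P * X * Q) = trm n (Q * (P * X))"
    by (rule trm_comm) (use assms in auto)
  also have "Q * (P * X) = (Q * P) * X" using assms by (metis assoc_mult_mat)
  finally show ?thesis using assms by simp
qed

lemma trm_upper: assumes "B \<in> carrier_mat n n" "upper_triangular B"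
  shows "trm n B = sum_list (diag_mat B)" "trm n (B * B) = sum_list (map (\<lambda>e. e^2) (diag_mat B))"
proof -
  have dm: "diag_mat B = map (\<lambda>i. B $$ (i,i)) [0..<n]" unfolding diag_mat_def using assms by simp
  show "trm n B = sum_list (diag_mat B)" unfolding dm trm_def
    by (simp add: sum_list_map_eq_sum_count lessThan_atLeast0 sum_set_upt_conv_sum_list_nat[symmetric])
  have "trm n (B * B) = (\<Sum>i<n. B $$ (i,i) ^ 2)"
    unfolding trm_def
  proof (intro sum.cong refl)
    fix i assume i: "i \<in> {..<n}"
    have "(B * B) $$ (i,i) = (\<Sum>k<n. B $$ (i,k) * B $$ (k,i))"
      using assms i by (auto simp: scalar_prod_def lessThan_atLeast0)
    also have "\<dots> = (\<Sum>k<n. if k = i then B $$ (i,i) ^ 2 else 0)"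
    proof (intro sum.cong refl)
      fix k assume k: "k \<in> {..<n}"
      show "B $$ (i,k) * B $$ (k,i) = (if k = i then B $$ (i,i) ^ 2 else 0)"
      proof (cases "k < i")
        case True then show ?thesis using assms(2) i assms(1) unfolding upper_triangular_def by auto
      next
        case False
        then show ?thesis using assms(2) k assms(1) unfolding upper_triangular_def
          by (cases "k = i") (auto simp: power2_eq_square)
      qed
    qed
    also have "\<dots> = B $$ (i,i) ^ 2" using i by simp
    finally show "(B * B) $$ (i,i) = B $$ (i,i) ^ 2" .
  qed
  then show "trm n (B * B) = sum_list (map (\<lambda>e. e^2) (diag_mat B))" unfolding dm
    by (simp add: lessThan_atLeast0 sum_set_upt_conv_sum_list_nat[symmetric] o_def)
qed

lemma sum_count3: fixes f :: "complex \<Rightarrow> complex"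
  assumes "set xs \<subseteq> {a,b,c}" "a \<noteq> b" "a \<noteq> c" "b \<noteq> c"
  shows "sum_list (map f xs) = of_nat (count_list xs a) * f a + of_nat (count_list xs b) * f b + of_nat (count_list xs c) * f c"
  using assms(1) by (induct xs) (use assms(2-4) in \<open>auto simp: algebra_simps\<close>)

lemma order_count: fixes xs :: "complex list"
  shows "Polynomial.order x (\<Prod>e\<leftarrow>xs. [:- e, 1:]) = count_list xs x"
proof (induct xs)
  case (Cons a xs)
  have nz: "(\<Prod>e\<leftarrow>xs. [:- e, 1:]) \<noteq> 0" by (auto simp: prod_list_zero_iff)
  have "Polynomial.order x ([:- a, 1:] * (\<Prod>e\<leftarrow>xs. [:- e, 1:])) = Polynomial.order x [:- a, 1:] + Polynomial.order x (\<Prod>e\<leftarrow>xs. [:- e, 1:])"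
  proof (rule order_mult)
    have "[:- a, 1:] \<noteq> (0::complex poly)" by simp
    with nz show "[:- a, 1:] * (\<Prod>e\<leftarrow>xs. [:- e, 1:]) \<noteq> 0" by (simp only: mult_eq_0_iff) simp
  qed
  then show ?case using Cons by (simp add: order_linear')
qed simp

interpretation ofr: map_poly_inj_idom_divide_hom "of_real :: real \<Rightarrow> complex"
  by unfold_locales (simp add: of_real_divide)

locale conf =
  fixes v t :: nat and E :: "nat \<Rightarrow> nat \<Rightarrow> bool"
  assumes srg: "strongly_regular v E (2*t) (t-1) t"
    and vt: "v = 4*t+1" and t3: "t \<ge> 3"
begin

lemma sg: "simple_graph v E" using srg unfolding strongly_regular_def by auto
lemma Ebound: "E i j \<Longrightarrow> i < v \<and> j < v" using sg unfolding simple_graph_def by auto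
lemma Esym: "E i j \<Longrightarrow> E j i" using sg unfolding simple_graph_def by auto
lemma Eirr: "\<not> E i i" using sg unfolding simple_graph_def by auto
lemma deg: "i < v \<Longrightarrow> card {j. j < v \<and> E i j} = 2*t"
  using srg unfolding strongly_regular_def neighbours_def by auto
lemma comm_adj: "i < v \<Longrightarrow> j < v \<Longrightarrow> E i j \<Longrightarrow> card ({x. x < v \<and> E i x} \<inter> {x. x < v \<and> E j x}) = t - 1"
  using srg unfolding strongly_regular_def neighbours_def by auto
lemma comm_non: "i < v \<Longrightarrow> j < v \<Longrightarrow> i \<noteq> j \<Longrightarrow> \<not> E i j \<Longrightarrow> card ({x. x < v \<and> E i x} \<inter> {x. x < v \<and> E j x}) = t"
  using srg unfolding strongly_regular_def neighbours_def by auto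

lemma walk1: "walk E 1 u w \<longleftrightarrow> E u w" by simp
lemma walk2: "walk E 2 u w \<longleftrightarrow> (\<exists>x. E u x \<and> E x w)" by (simp add: numeral_2_eq_2)

lemma dist_eq: assumes "i < v" "j < v"
  shows "graph_dist E i j = (if i = j then 0 else if E i j then 1 else 2)"
proof -
  consider "i = j" | "i \<noteq> j" "E i j" | "i \<noteq> j" "\<not> E i j" by blast
  then show ?thesis
  proof cases
    case 1 then show ?thesis unfolding graph_dist_def by (intro Least_equality) auto
  next
    case 2 have "graph_dist E i j = 1" unfolding graph_dist_def
    proof (intro Least_equality)
      fix y assume "walk E y i j" with 2 show "1 \<le> y" by (cases y) auto
    qed (use 2 in auto)
    then show ?thesis using 2 by simp
  next
    case 3
    have "card ({x. x < v \<and> E i x} \<inter> {x. x < v \<and> E j x}) = t" using comm_non 3 assms by auto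
    then have "({x. x < v \<and> E i x} \<inter> {x. x < v \<and> E j x}) \<noteq> {}" using t3 by (metis card.empty not_numeral_le_zero le_0_eq)
    then obtain x where "x < v" "E i x" "E j x" by blast
    then have w2: "walk E 2 i j" using Esym walk2 by blast
    have "graph_dist E i j = 2" unfolding graph_dist_def
    proof (intro Least_equality)
      fix y assume "walk E y i j"
      with 3 show "2 \<le> y" by (cases y; cases "y - 1") (auto simp: numeral_2_eq_2)
    qed (use w2 in auto)
    then show ?thesis using 3 by simp
  qed
qed

definition aa :: "nat \<Rightarrow> nat \<Rightarrow> real" where "aa i j = (if E i j then 1 else 0)"
definition dl :: "nat \<Rightarrow> nat \<Rightarrow> real" where "dl i j = (if i = j then 1 else 0)"
definition dd :: "nat \<Rightarrow> nat \<Rightarrow> real" where "dd i j = (if i = j then 0 else if E i j then 1 else 2)"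

lemma dd_alt: "dd i j = 2 - 2 * dl i j - aa i j"
  unfolding dd_def dl_def aa_def using Eirr by auto

lemma dd_sym: "dd i j = dd j i" unfolding dd_def using Esym by auto

lemma aa_row: assumes "i < v" shows "(\<Sum>j<v. aa i j) = 2 * real t"
proof -
  have "(\<Sum>j<v. aa i j) = real (card {j\<in>{..<v}. E i j})"
    unfolding aa_def by (simp add: sum.If_cases Int_def)
  also have "{j\<in>{..<v}. E i j} = {j. j < v \<and> E i j}" by auto
  finally show ?thesis using deg[OF assms] by simp
qed

lemma aa_sq: assumes "i < v" "l < v"
  shows "(\<Sum>j<v. aa i j * aa j l) = real t + real t * dl i l - aa i l"
proof -
  have "(\<Sum>j<v. aa i j * aa j l) = real (card {j\<in>{..<v}. E i j \<and> E j l})"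
  proof -
    have "(\<Sum>j<v. aa i j * aa j l) = (\<Sum>j<v. if E i j \<and> E j l then 1 else 0)"
      by (intro sum.cong) (auto simp: aa_def)
    then show ?thesis by (simp add: sum.If_cases Int_def)
  qed
  also have "{j\<in>{..<v}. E i j \<and> E j l} = {x. x < v \<and> E i x} \<inter> {x. x < v \<and> E l x}"
    using Esym by auto
  finally have e: "(\<Sum>j<v. aa i j * aa j l) = real (card ({x. x < v \<and> E i x} \<inter> {x. x < v \<and> E l x}))" .
  consider "i = l" | "i \<noteq> l" "E i l" | "i \<noteq> l" "\<not> E i l" by blast
  then show ?thesis
  proof cases
    case 1 then show ?thesis using e deg[OF assms(1)] Eirr by (simp add: dl_def aa_def)
  next
    case 2 then show ?thesis using e comm_adj[OF assms] t3 by (simp add: dl_def aa_def of_nat_diff)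
  next
    case 3 then show ?thesis using e comm_non[OF assms] by (simp add: dl_def aa_def)
  qed
qed

lemma dd_row: assumes "i < v" shows "(\<Sum>j<v. dd i j) = 6 * real t"
proof -
  have "(\<Sum>j<v. dd i j) = 2 * real v - 2 * (\<Sum>j<v. dl i j) - (\<Sum>j<v. aa i j)"
    unfolding dd_alt by (simp add: sum_subtractf sum_distrib_left)
  also have "(\<Sum>j<v. dl i j) = 1" unfolding dl_def using assms by simp
  finally show ?thesis using aa_row[OF assms] vt by simp
qed

lemma dd_sq: assumes "i < v" "l < v"
  shows "(\<Sum>j<v. dd i j * dd j l) = 9 * real t + 2 - 3 * dd i l - (2 - real t) * dl i l"
proof -
  have "(\<Sum>j<v. dd i j * dd j l) = (\<Sum>j<v. 4 - 4 * dl j l - 2 * aa j l - 4 * dl i j + 4 * (dl i j * dl j l)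
      + 2 * (dl i j * aa j l) - 2 * aa i j + 2 * (aa i j * dl j l) + aa i j * aa j l)"
    unfolding dd_alt by (intro sum.cong) (auto simp: algebra_simps)
  also have "\<dots> = 4 * real v - 4 * (\<Sum>j<v. dl j l) - 2 * (\<Sum>j<v. aa j l) - 4 * (\<Sum>j<v. dl i j)
     + 4 * (\<Sum>j<v. dl i j * dl j l) + 2 * (\<Sum>j<v. dl i j * aa j l) - 2 * (\<Sum>j<v. aa i j)
     + 2 * (\<Sum>j<v. aa i j * dl j l) + (\<Sum>j<v. aa i j * aa j l)"
    by (simp add: sum.distrib sum_subtractf sum_distrib_left)
  also have "(\<Sum>j<v. dl j l) = 1" unfolding dl_def using assms by simp
  also have "(\<Sum>j<v. dl i j) = 1" unfolding dl_def using assms by simp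
  also have "(\<Sum>j<v. dl i j * dl j l) = dl i l"
  proof -
    have "(\<Sum>j<v. dl i j * dl j l) = (\<Sum>j<v. if i = j then dl i l else 0)"
      by (intro sum.cong) (auto simp: dl_def)
    then show ?thesis using assms by simp
  qed
  also have "(\<Sum>j<v. dl i j * aa j l) = aa i l"
  proof -
    have "(\<Sum>j<v. dl i j * aa j l) = (\<Sum>j<v. if i = j then aa i l else 0)"
      by (intro sum.cong) (auto simp: dl_def)
    then show ?thesis using assms by simp
  qed
  also have "(\<Sum>j<v. aa i j * dl j l) = aa i l"
  proof -
    have "(\<Sum>j<v. aa i j * dl j l) = (\<Sum>j<v. if l = j then aa i l else 0)"
      by (intro sum.cong) (auto simp: dl_def)
    then show ?thesis using assms by simp
  qed
  also have "(\<Sum>j<v. aa j l) = 2 * real t"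
  proof -
    have "(\<Sum>j<v. aa j l) = (\<Sum>j<v. aa l j)" unfolding aa_def using Esym by (intro sum.cong) auto
    then show ?thesis using aa_row[OF assms(2)] by simp
  qed
  finally show ?thesis using aa_row[OF assms(1)] aa_sq[OF assms] vt unfolding dd_alt
    by (simp add: algebra_simps)
qed

lemma eig: fixes e :: complex and x :: "nat \<Rightarrow> complex"
  assumes ev: "\<And>i. i < v \<Longrightarrow> (\<Sum>j<v. of_real (dd i j) * x j) = e * x i"
    and nz: "i0 < v" "x i0 \<noteq> 0"
  shows "e = of_real (6 * real t) \<or> e^2 + 3*e + 2 - of_nat t = 0"
proof -
  define S where "S = (\<Sum>i<v. x i)"
  have "(\<Sum>i<v. \<Sum>j<v. of_real (dd i j) * x j) = (\<Sum>j<v. (\<Sum>i<v. of_real (dd i j)) * x j)"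
    by (subst sum.swap) (simp add: sum_distrib_right)
  also have "\<dots> = (\<Sum>j<v. of_real (6 * real t) * x j)"
  proof (intro sum.cong refl)
    fix j assume "j \<in> {..<v}"
    then have "(\<Sum>i<v. dd i j) = 6 * real t" using dd_row[of j] dd_sym by (simp add: dd_sym)
    then have "(\<Sum>i<v. complex_of_real (dd i j)) = of_real (6 * real t)"
      by (metis of_real_sum)
    then show "(\<Sum>i<v. complex_of_real (dd i j)) * x j = of_real (6 * real t) * x j" by simp
  qed
  finally have h1: "e * S = of_real (6 * real t) * S"
    using ev unfolding S_def by (simp add: sum_distrib_left[symmetric])
  have h2: "(e^2 + 3*e + 2 - of_nat t) * x i = of_real (9 * real t + 2) * S" if i: "i < v" for i
  proof -
    have "e * e * x i = (\<Sum>j<v. of_real (dd i j) * (e * x j))"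
    proof -
      have "(\<Sum>j<v. of_real (dd i j) * (e * x j)) = e * (\<Sum>j<v. of_real (dd i j) * x j)"
        by (simp add: sum_distrib_left algebra_simps)
      then show ?thesis using ev[OF i] by simp
    qed
    also have "\<dots> = (\<Sum>j<v. of_real (dd i j) * (\<Sum>l<v. of_real (dd j l) * x l))"
      using ev by simp
    also have "\<dots> = (\<Sum>l<v. (\<Sum>j<v. of_real (dd i j) * of_real (dd j l)) * x l)"
      by (simp add: sum_distrib_left sum_distrib_right algebra_simps) (subst sum.swap, simp)
    also have "\<dots> = (\<Sum>l<v. (of_real (9 * real t + 2) - 3 * of_real (dd i l) - (2 - of_nat t) * of_real (dl i l)) * x l)"
    proof (intro sum.cong refl)
      fix l assume "l \<in> {..<v}"
      then have "(\<Sum>j<v. dd i j * dd j l) = 9 * real t + 2 - 3 * dd i l - (2 - real t) * dl i l"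
        using dd_sq i by simp
      then have "(\<Sum>j<v. complex_of_real (dd i j) * of_real (dd j l)) = of_real (9 * real t + 2 - 3 * dd i l - (2 - real t) * dl i l)"
        by (metis (no_types, lifting) of_real_mult of_real_sum sum.cong)
      then show "(\<Sum>j<v. complex_of_real (dd i j) * of_real (dd j l)) * x l = (of_real (9 * real t + 2) - 3 * of_real (dd i l) - (2 - of_nat t) * of_real (dl i l)) * x l"
        by simp
    qed
    also have "\<dots> = of_real (9 * real t + 2) * S - 3 * (\<Sum>l<v. of_real (dd i l) * x l) - (2 - of_nat t) * (\<Sum>l<v. of_real (dl i l) * x l)"
      unfolding S_def by (simp add: algebra_simps sum.distrib sum_subtractf sum_distrib_left sum_distrib_right)
    also have "(\<Sum>l<v. of_real (dl i l) * x l) = x i"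
    proof -
      have "(\<Sum>l<v. complex_of_real (dl i l) * x l) = (\<Sum>l<v. if i = l then x i else 0)"
        by (intro sum.cong) (auto simp: dl_def)
      then show ?thesis using i by simp
    qed
    finally show ?thesis using ev[OF i] by (simp add: algebra_simps power2_eq_square)
  qed
  show ?thesis
  proof (cases "e = of_real (6 * real t)")
    case False
    with h1 have "S = 0" by simp
    with h2[OF nz(1)] nz(2) show ?thesis by simp
  qed simp
qed

abbreviation "Dm \<equiv> distance_matrix v E"
abbreviation "Cm \<equiv> map_mat complex_of_real Dm"

lemma D_carrier: "Dm \<in> carrier_mat v v" unfolding distance_matrix_def by simp
lemma C_carrier: "Cm \<in> carrier_mat v v" using D_carrier by simp
lemma D_idx: "i < v \<Longrightarrow> j < v \<Longrightarrow> Dm $$ (i,j) = dd i j"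
  unfolding distance_matrix_def by (simp add: dist_eq dd_def)
lemma C_idx: "i < v \<Longrightarrow> j < v \<Longrightarrow> Cm $$ (i,j) = of_real (dd i j)"
  unfolding distance_matrix_def by (simp add: dist_eq dd_def)

lemma root: assumes "poly (char_poly Cm) e = 0"
  shows "e = of_real (6 * real t) \<or> e^2 + 3*e + 2 - of_nat t = 0"
proof -
  have "eigenvalue Cm e" using eigenvalue_root_char_poly[OF C_carrier] assms by simp
  then obtain x where x: "x \<in> carrier_vec v" "x \<noteq> 0\<^sub>v v" "Cm *\<^sub>v x = e \<cdot>\<^sub>v x"
    unfolding eigenvalue_def eigenvector_def using C_carrier by auto
  have ev: "(\<Sum>j<v. of_real (dd i j) * x $ j) = e * x $ i" if i: "i < v" for i
  proof -
    have "(Cm *\<^sub>v x) $ i = (e \<cdot>\<^sub>v x) $ i" using x(3) by simp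
    then show ?thesis using i x(1) C_carrier
      by (auto simp: scalar_prod_def lessThan_atLeast0 C_idx D_idx intro!: sum.cong)
  qed
  obtain i0 where i0: "i0 < v" "x $ i0 \<noteq> 0"
  proof -
    { assume "\<forall>i<v. x $ i = 0"
      then have "x = 0\<^sub>v v" using x(1) by (intro eq_vecI) auto
      with x(2) have False by simp }
    then show ?thesis using that by blast
  qed
  show ?thesis by (rule eig[of "\<lambda>j. x $ j"]) (use ev i0 in auto)
qed

lemma trC: "trm v Cm = 0"
  unfolding trm_def using C_idx by (simp add: dd_def)

lemma trCC: "trm v (Cm * Cm) = of_nat v * of_nat (10 * t)"
proof -
  have "trm v (Cm * Cm) = (\<Sum>i<v. of_nat (10 * t))"
    unfolding trm_def
  proof (intro sum.cong refl)
    fix i assume i: "i \<in> {..<v}"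
    have "(Cm * Cm) $$ (i,i) = (\<Sum>j<v. of_real (dd i j) * of_real (dd j i))"
      using i C_carrier by (auto simp: scalar_prod_def lessThan_atLeast0 C_idx D_idx intro!: sum.cong)
    also have "\<dots> = of_real (\<Sum>j<v. dd i j * dd j i)" by simp
    also have "(\<Sum>j<v. dd i j * dd j i) = 10 * real t"
      using dd_sq[of i i] i by (simp add: dd_def dl_def algebra_simps)
    finally show "(Cm * Cm) $$ (i,i) = of_nat (10 * t)" by simp
  qed
  then show ?thesis by simp
qed


lemma main: "optimistic v E"
proof -
  obtain es where cp: "char_poly Cm = (\<Prod>a\<leftarrow>es. [:- a, 1:])" and len: "length es = v"
    using char_poly_factorized[OF C_carrier] by blast
  obtain B P Q where sd: "schur_decomposition Cm es = (B,P,Q)" by (cases "schur_decomposition Cm es") auto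
  from schur_decomposition[OF C_carrier cp sd]
  have sim: "similar_mat_wit Cm B P Q" and ut: "upper_triangular B" and dg: "diag_mat B = es" by auto
  note sw = similar_mat_witD2[OF C_carrier sim]
  have Bc: "B \<in> carrier_mat v v" and Pc: "P \<in> carrier_mat v v" and Qc: "Q \<in> carrier_mat v v"
    and PQ: "P * Q = 1\<^sub>m v" and QP: "Q * P = 1\<^sub>m v" and CPBQ: "Cm = P * B * Q"
    using sw by auto
  have s1: "sum_list es = 0"
  proof -
    have "trm v Cm = trm v B" unfolding CPBQ by (rule trm_sim[OF Bc Pc Qc QP])
    then show ?thesis using trC trm_upper(1)[OF Bc ut] dg by simp
  qed
  have "Cm * Cm = P * (B * B) * Q"
  proof -
    have "Cm * Cm = P * B * Q * (P * B * Q)" unfolding CPBQ ..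
    also have "\<dots> = P * B * (Q * (P * B * Q))"
      by (rule assoc_mult_mat[of _ v v]) (use Bc Pc Qc in auto)
    also have "Q * (P * B * Q) = (Q * P) * B * Q"
    proof -
      have "Q * (P * B * Q) = Q * (P * B) * Q" by (rule assoc_mult_mat[symmetric, of _ v v]) (use Bc Pc Qc in auto)
      also have "Q * (P * B) = (Q * P) * B" by (rule assoc_mult_mat[symmetric, of _ v v]) (use Bc Pc Qc in auto)
      finally show ?thesis .
    qed
    also have "\<dots> = B * Q" using QP Bc by simp
    also have "P * B * (B * Q) = P * (B * B) * Q"
    proof -
      have "P * B * (B * Q) = P * B * B * Q" by (rule assoc_mult_mat[symmetric, of _ v v]) (use Bc Pc Qc in auto)
      also have "P * B * B = P * (B * B)" by (rule assoc_mult_mat[of _ v v]) (use Bc Pc Qc in auto)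
      finally show ?thesis .
    qed
    finally show ?thesis .
  qed
  then have "trm v (Cm * Cm) = trm v (B * B)" using trm_sim[OF mult_carrier_mat[OF Bc Bc] Pc Qc QP] by simp
  then have s2: "sum_list (map (\<lambda>e. e^2) es) = of_nat v * of_nat (10 * t)"
    using trCC trm_upper(2)[OF Bc ut] dg by simp
  define w where "w = sqrt (real v)"
  have w2: "w^2 = 4 * real t + 1" unfolding w_def using vt by simp
  have w3: "w > 3" unfolding w_def using vt t3 by (simp add: real_less_rsqrt)
  define aR bR cR where "aR = 6 * real t" and "bR = - (3 + w) / 2" and "cR = (w - 3) / 2"
  have aR0: "aR > 0" "cR > 0" "bR < 0" using t3 w3 unfolding aR_def bR_def cR_def by auto
  have ac: "aR \<noteq> cR"
  proof
    assume "aR = cR"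
    then have "w = 12 * real t + 3" unfolding aR_def cR_def by simp
    then have "w^2 = (12 * real t + 3)^2" by simp
    then have "4 * real t + 1 = (12 * real t + 3)^2" using w2 by simp
    moreover have "(12 * real t + 3)^2 \<ge> 12 * real t + 3"
      using mult_left_mono[of 1 "12*real t+3" "12*real t+3"] by (simp add: power2_eq_square)
    ultimately show False by linarith
  qed
  have roots: "set es \<subseteq> {of_real aR, of_real bR, of_real cR}"
  proof
    fix e assume e: "e \<in> set es"
    have "poly (char_poly Cm) e = 0" unfolding cp poly_prod_list prod_list_zero_iff using e by force
    from root[OF this] show "e \<in> {of_real aR, of_real bR, of_real cR}"
    proof
      assume "e = of_real (6 * real t)" then show ?thesis unfolding aR_def by simp
    next
      assume q: "e^2 + 3*e + 2 - of_nat t = 0"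
      have "e^2 + 3*e + 2 - of_nat t = (e - of_real bR) * (e - of_real cR)"
      proof -
        have "(of_real bR :: complex) + of_real cR = -3" unfolding bR_def cR_def by (simp add: field_simps)
        moreover have "(of_real bR :: complex) * of_real cR = 2 - of_nat t"
        proof -
          have "bR * cR = 2 - real t" unfolding bR_def cR_def using w2
            by (simp add: field_simps power2_eq_square)
          then have "complex_of_real (bR * cR) = complex_of_real (2 - real t)" by simp
          then show ?thesis by simp
        qed
        moreover have "(e - of_real bR) * (e - of_real cR) = e^2 - (of_real bR + of_real cR) * e + of_real bR * of_real cR"
          by (simp add: algebra_simps power2_eq_square)
        ultimately show ?thesis by simp
      qed
      with q show ?thesis by auto
    qed
  qed
  have d1: "(of_real aR :: complex) \<noteq> of_real bR" "(of_real aR :: complex) \<noteq> of_real cR" "(of_real bR :: complex) \<noteq> of_real cR"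
    using aR0 ac by auto
  define na nb nc where "na = count_list es (of_real aR)" and "nb = count_list es (of_real bR)"
    and "nc = count_list es (of_real cR)"
  have e0: "of_nat na + of_nat nb + of_nat nc = (of_nat v :: complex)"
    using sum_count3[OF roots d1, of "\<lambda>_. 1"] len unfolding na_def nb_def nc_def
    by (simp add: sum_list_triv)
  have e1: "of_nat na * of_real aR + of_nat nb * of_real bR + of_nat nc * of_real cR = (0 :: complex)"
    using sum_count3[OF roots d1, of "\<lambda>e. e"] s1 unfolding na_def nb_def nc_def by simp
  have e2: "of_nat na * of_real aR ^ 2 + of_nat nb * of_real bR ^ 2 + of_nat nc * of_real cR ^ 2 = (of_nat v * of_nat (10 * t) :: complex)"
    using sum_count3[OF roots d1, of "\<lambda>e. e^2"] s2 unfolding na_def nb_def nc_def by simp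
  have r0: "real na + real nb + real nc = real v"
    using e0 by (metis of_nat_add of_nat_eq_iff)
  have r1: "real na * aR + real nb * bR + real nc * cR = 0"
  proof -
    have "complex_of_real (real na * aR + real nb * bR + real nc * cR) = 0" using e1 by simp
    then show ?thesis by (simp only: of_real_eq_0_iff)
  qed
  have r2: "real na * aR^2 + real nb * bR^2 + real nc * cR^2 = real v * (10 * real t)"
  proof -
    have "complex_of_real (real na * aR^2 + real nb * bR^2 + real nc * cR^2) = complex_of_real (real v * (10 * real t))" using e2 by simp
    then show ?thesis by (simp only: of_real_eq_iff)
  qed
  have "real nb * ((bR - aR) * (bR - cR)) = (real na * aR^2 + real nb * bR^2 + real nc * cR^2)
      - (aR + cR) * (real na * aR + real nb * bR + real nc * cR) + aR * cR * (real na + real nb + real nc)"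
    by (simp add: algebra_simps power2_eq_square)
  also have "\<dots> = real v * (10 * real t) + aR * cR * real v" using r0 r1 r2 by simp
  finally have nbe: "real nb * ((bR - aR) * (bR - cR)) = real v * (10 * real t) + aR * cR * real v" .
  have den: "(bR - aR) * (bR - cR) = real v * (1 + 3 * w) / 2"
    unfolding aR_def bR_def cR_def using w2 vt by (simp add: field_simps power2_eq_square)
  have num: "real v * (10 * real t) + aR * cR * real v = real v * (1 + 3 * w) * real t"
    unfolding aR_def cR_def using w2 vt by (simp add: field_simps power2_eq_square)
  have "real v * (1 + 3 * w) > 0" using vt w3 by simp
  define K where "K = real v * (1 + 3 * w)"
  have K0: "K \<noteq> 0" unfolding K_def using vt w3 by simp
  have "real nb * (K / 2) = K * real t" using nbe unfolding den num K_def .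
  then have "real nb * K = (2 * real t) * K" by (simp add: field_simps)
  with K0 have "real nb = 2 * real t" by simp
  then have nb2: "nb = 2 * t" by linarith
  with r0 vt have nac: "na + nc = 2 * t + 1" by linarith
  have cpD: "char_poly Cm = map_poly of_real (char_poly Dm)"
    using of_real_hom.char_poly_hom[OF D_carrier] by simp
  have ordx: "Polynomial.order x (char_poly Dm) = count_list es (of_real x)" for x
  proof -
    have "Polynomial.order x (char_poly Dm) = Polynomial.order (of_real x) (char_poly Cm)"
      unfolding cpD by (rule ofr.order_hom[symmetric])
    then show ?thesis unfolding cp order_count .
  qed
  have cpnz: "char_poly Dm \<noteq> 0"
    using degree_monic_char_poly[OF D_carrier] by auto
  have rootx: "poly (char_poly Dm) x = 0 \<longleftrightarrow> count_list es (of_real x) \<noteq> 0" for x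
    using order_root[of "char_poly Dm" x] cpnz ordx by simp
  have inset: "count_list es y \<noteq> 0 \<Longrightarrow> y \<in> set es" for y
    by (metis count_notin)
  have ofr_in: "x = aR \<or> x = bR \<or> x = cR" if "count_list es (of_real x) \<noteq> 0" for x
    using roots inset[OF that] by auto
  have np: "n_plus Dm = na + nc"
  proof -
    have "n_plus Dm = (\<Sum>x\<in>{x. poly (char_poly Dm) x = 0 \<and> x > 0}. count_list es (of_real x))"
      unfolding n_plus_def using ordx by simp
    also have "\<dots> = (\<Sum>x\<in>{aR, cR}. count_list es (of_real x))"
    proof (rule sum.mono_neutral_left)
      show "{x. poly (char_poly Dm) x = 0 \<and> x > 0} \<subseteq> {aR, cR}"
        using rootx ofr_in aR0 by force
      show "\<forall>i\<in>{aR, cR} - {x. poly (char_poly Dm) x = 0 \<and> x > 0}. count_list es (of_real i) = 0"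
        using rootx aR0 by auto
    qed auto
    also have "\<dots> = na + nc" using ac unfolding na_def nc_def by simp
    finally show ?thesis .
  qed
  have nm: "n_minus Dm = nb"
  proof -
    have "n_minus Dm = (\<Sum>x\<in>{x. poly (char_poly Dm) x = 0 \<and> x < 0}. count_list es (of_real x))"
      unfolding n_minus_def using ordx by simp
    also have "\<dots> = (\<Sum>x\<in>{bR}. count_list es (of_real x))"
    proof (rule sum.mono_neutral_left)
      show "{x. poly (char_poly Dm) x = 0 \<and> x < 0} \<subseteq> {bR}"
      proof
        fix x assume "x \<in> {x. poly (char_poly Dm) x = 0 \<and> x < 0}"
        then have "count_list es (of_real x) \<noteq> 0" "x < 0" using rootx by auto
        with ofr_in[OF this(1)] aR0 show "x \<in> {bR}" by auto
      qed
      show "\<forall>i\<in>{bR} - {x. poly (char_poly Dm) x = 0 \<and> x < 0}. count_list es (of_real i) = 0"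
        using rootx aR0 by auto
    qed auto
    also have "\<dots> = nb" unfolding nb_def by simp
    finally show ?thesis .
  qed
  show ?thesis unfolding optimistic_def np nm using nb2 nac by simp
qed

end

theorem theorem1:
  fixes v k l m :: nat and E :: "nat \<Rightarrow> nat \<Rightarrow> bool"
  assumes "v > 9"
    and "strongly_regular v E k l m"
    and "2 * k = v - 1" and "4 * l = v - 5" and "4 * m = v - 1"
  shows "optimistic v E"
proof -
  have k: "k = 2 * m" and l: "l = m - 1" and vm: "v = 4 * m + 1" and m3: "m \<ge> 3"
    using assms(1,3,4,5) by linarith+
  interpret conf v m E
    by unfold_locales (use assms(2) k l vm m3 in auto)
  show ?thesis by (rule main)
qed

end
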